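(* Consider the mixed support-set model described in the context, and let $\mathsf p,\mathsf q_1,\dots,\mathsf q_h,\mathsf r_1,\dots,\mathsf r_m$ be $1+h+m$ distinct sensors. Then (whenever the conditioning event has positive probability) $\Pr\Big(i\in\mathcal T_{\mathsf p}\ \Big|\ i\in\hat{\mathcal T}_{\mathsf p},\ i\in\bigcap_{l=1}^{h}\hat{\mathcal T}_{\mathsf q_l},\ i\in\bigcap_{l=1}^{m}\hat{\mathcal T}_{\mathsf r_l}^{\complement}\Big)$ equals, writing $\phi=\frac{T}{N-T}\epsilon$, $$\frac{(1-\epsilon)^{h+1}\epsilon^{m}\frac{J}{N}+(1-\epsilon)\phi^{h}(1-\phi)^{m}\frac{I}{N}}{(1-\epsilon)^{h+1}\epsilon^{m}\frac{J}{N}+(h+1)(1-\epsilon)\phi^{h}(1-\phi)^{m}\frac{I}{N}+m\,\epsilon\,\phi^{h+1}(1-\phi)^{m-1}\frac{I}{N}+\phi^{h+1}(1-\phi)^{m}\frac{N-J-(m+h+1)I}{N}}.$$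
   Context: Let $N>T\ge1$ be integers and $\Omega=\{1,\dots,N\}$; complements are taken in $\Omega$. A finite set $\mathcal L$ of sensors is given. Mixed support-set model: there are a fixed set $\mathcal J\subseteq\Omega$ with $|\mathcal J|=J$ and, for each sensor $\mathsf p\in\mathcal L$, a fixed set $\mathcal I_{\mathsf p}\subseteq\Omega$ with $|\mathcal I_{\mathsf p}|=I$, such that $\mathcal I_{\mathsf p}\cap\mathcal J=\emptyset$ for all $\mathsf p$, $\mathcal I_{\mathsf p}\cap\mathcal I_{\mathsf q}=\emptyset$ for $\mathsf p\ne\mathsf q$, and the true support set of sensor $\mathsf p$ is $\mathcal T_{\mathsf p}=\mathcal I_{\mathsf p}\cup\mathcal J$; thus $T=I+J$. Each sensor has a random estimated support set $\hat{\mathcal T}_{\mathsf p}\subseteq\Omega$. A random index $i$ is uniformly distributed on $\Omega$ and independent of all estimates. System model: there is $\epsilon$ with $0\le\epsilon\le (N-T)/N$, common to all sensors, such that for every sensor $\mathsf p$ and every $j\in\Omega$, $\Pr(j\in\hat{\mathcal T}_{\mathsf p})=1-\epsilon$ if $j\in\mathcal T_{\mathsf p}$ and $\Pr(j\in\hat{\mathcal T}_{\mathsf p})=\frac{T}{N-T}\epsilon$ if $j\notin\mathcal T_{\mathsf p}$ (so $\Pr(i\in\hat{\mathcal T}_{\mathsf p})=T/N$, detection probability $1-\epsilon$, miss probability $\epsilon$, false-alarm probability $\frac{T}{N-T}\epsilon$). For each fixed $j\in\Omega$, the events $\{j\in\hat{\mathcal T}_{\mathsf p}\}$, $\mathsf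 p\in\mathcal L$, are mutually independent. Convention: $0^0=1$ and a term with coefficient $0$ is $0$. *)

theory Defs
  imports "HOL-Probability.Probability"
begin

end

theory Submission
  imports Defs "HOL-Probability.Probability"
begin

lemma (in prob_space) evset_meas:
  assumes "E ` L \<subseteq> events" "finite A" "finite B" "A \<subseteq> L" "B \<subseteq> L"
  shows "{\<omega>\<in>space M. (\<forall>s\<in>A. \<omega>\<in>E s) \<and> (\<forall>s\<in>B. \<omega>\<notin>E s)} \<in> events"
proof -
  have eq: "{\<omega>\<in>space M. (\<forall>s\<in>A. \<omega>\<in>E s) \<and> (\<forall>s\<in>B. \<omega>\<notin>E s)}
        = (space M - (\<Union>s\<in>A. space M - E s)) - (\<Union>s\<in>B. E s)" by blast
  have 1: "(\<Union>s\<in>A. space M - E s) \<in> events"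
    using assms by (intro sets.finite_UN sets.Diff) auto
  have 2: "(\<Union>s\<in>B. E s) \<in> events"
    using assms by (intro sets.finite_UN) auto
  show ?thesis unfolding eq using 1 2 by (intro sets.Diff) auto
qed

lemma (in prob_space) indep_mixed:
  assumes ind: "indep_events E L" and finL: "finite L"
  shows "finite B \<Longrightarrow> B \<subseteq> L \<Longrightarrow> A \<subseteq> L \<Longrightarrow> A \<inter> B = {} \<Longrightarrow>
    prob {\<omega>\<in>space M. (\<forall>s\<in>A. \<omega>\<in>E s) \<and> (\<forall>s\<in>B. \<omega>\<notin>E s)}
      = (\<Prod>s\<in>A. prob (E s)) * (\<Prod>s\<in>B. 1 - prob (E s))"
proof (induction B arbitrary: A rule: finite_induct)
  case empty
  have ev: "E ` L \<subseteq> events" using ind unfolding indep_events_def by blast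
  show ?case
  proof (cases "A = {}")
    case True then show ?thesis by (simp add: prob_space)
  next
    case False
    have fA: "finite A" using empty finL finite_subset by blast
    have "{\<omega>\<in>space M. (\<forall>s\<in>A. \<omega>\<in>E s) \<and> (\<forall>s\<in>{}. \<omega>\<notin>E s)} = (\<Inter>s\<in>A. E s)"
    proof -
      have sub: "\<forall>s\<in>A. E s \<subseteq> space M" using ev empty sets.sets_into_space by blast
      show ?thesis using sub False by blast
    qed
    moreover have "prob (\<Inter>s\<in>A. E s) = (\<Prod>s\<in>A. prob (E s))"
    proof -
      have "\<forall>J\<subseteq>L. J \<noteq> {} \<longrightarrow> finite J \<longrightarrow> prob (\<Inter>j\<in>J. E j) = (\<Prod>j\<in>J. prob (E j))"
        using ind unfolding indep_events_def by blast
      then show ?thesis using False fA empty by blast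
    qed
    ultimately show ?thesis by simp
  qed
next
  case (insert b B)
  have ev: "E ` L \<subseteq> events" using ind unfolding indep_events_def by blast
  have fA: "finite A" using insert finL finite_subset by blast
  have fB: "finite B" using insert finL finite_subset by blast
  let ?X = "{\<omega>\<in>space M. (\<forall>s\<in>A. \<omega>\<in>E s) \<and> (\<forall>s\<in>B. \<omega>\<notin>E s)}"
  have X: "?X \<in> events" using evset_meas[OF ev fA fB] insert by auto
  have Eb: "E b \<in> events" using ev insert by auto
  have eq1: "{\<omega>\<in>space M. (\<forall>s\<in>A. \<omega>\<in>E s) \<and> (\<forall>s\<in>insert b B. \<omega>\<notin>E s)} = ?X - E b" by auto
  have eq2: "?X \<inter> E b = {\<omega>\<in>space M. (\<forall>s\<in>insert b A. \<omega>\<in>E s) \<and> (\<forall>s\<in>B. \<omega>\<notin>E s)}" by auto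
  have bA: "b \<notin> A" using insert by auto
  have "prob (?X - E b) = prob ?X - prob (?X \<inter> E b)"
    by (rule finite_measure_Diff'[OF X Eb])
  also have "\<dots> = (\<Prod>s\<in>A. prob (E s)) * (\<Prod>s\<in>B. 1 - prob (E s))
      - (\<Prod>s\<in>insert b A. prob (E s)) * (\<Prod>s\<in>B. 1 - prob (E s))"
  proof -
    have h1: "prob ?X = (\<Prod>s\<in>A. prob (E s)) * (\<Prod>s\<in>B. 1 - prob (E s))"
      by (rule insert.IH) (use insert.prems in auto)
    have h2: "prob (?X \<inter> E b) = (\<Prod>s\<in>insert b A. prob (E s)) * (\<Prod>s\<in>B. 1 - prob (E s))"
      unfolding eq2 by (rule insert.IH) (use insert.prems insert.hyps in auto)
    show ?thesis using h1 h2 by simp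
  qed
  also have "\<dots> = (\<Prod>s\<in>A. prob (E s)) * (\<Prod>s\<in>insert b B. 1 - prob (E s))"
  proof -
    have "(\<Prod>s\<in>insert b A. prob (E s)) = prob (E b) * (\<Prod>s\<in>A. prob (E s))"
      using bA fA by simp
    moreover have "(\<Prod>s\<in>insert b B. 1 - prob (E s)) = (1 - prob (E b)) * (\<Prod>s\<in>B. 1 - prob (E s))"
      using insert.hyps by simp
    ultimately show ?thesis by (simp only:) (simp add: left_diff_distrib right_diff_distrib)
  qed
  finally show ?case using eq1 by simp
qed

lemma (in prob_space) collect_all_fin:
  assumes "finite S" "\<And>i. i \<in> S \<Longrightarrow> {x\<in>space M. P i x} \<in> events"
  shows "{x\<in>space M. \<forall>i\<in>S. P i x} \<in> events"
proof -
  have "{x\<in>space M. \<forall>i\<in>S. P i x} = space M - (\<Union>i\<in>S. space M - {x\<in>space M. P i x})" by blast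
  also have "\<dots> \<in> events" using assms by (intro sets.Diff sets.finite_UN) auto
  finally show ?thesis .
qed

lemma (in prob_space) idx_indep_set:
  fixes That :: "'s \<Rightarrow> 'a \<Rightarrow> nat set" and idx :: "'a \<Rightarrow> nat"
  assumes That_rv: "\<forall>s\<in>L. That s \<in> measurable M (count_space (Pow {1..N}))"
    and idx_rv: "idx \<in> measurable M (count_space {1..N})"
    and idx_indep: "\<forall>j\<in>{1..N}. \<forall>f\<in>PiE L (\<lambda>_. Pow {1..N}).
        prob {\<omega> \<in> space M. idx \<omega> = j \<and> (\<forall>s\<in>L. That s \<omega> = f s)}
        = prob {\<omega> \<in> space M. idx \<omega> = j}
          * prob {\<omega> \<in> space M. \<forall>s\<in>L. That s \<omega> = f s}"
    and finL: "finite L" and j: "j \<in> {1..N}" and F: "F \<subseteq> PiE L (\<lambda>_. Pow {1..N})"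
  shows "prob {\<omega>\<in>space M. idx \<omega> = j \<and> restrict (\<lambda>s. That s \<omega>) L \<in> F}
       = prob {\<omega>\<in>space M. idx \<omega> = j} * prob {\<omega>\<in>space M. restrict (\<lambda>s. That s \<omega>) L \<in> F}"
proof -
  have finF: "finite F" using finite_PiE[of L "\<lambda>_. Pow {1..N}"] finL F finite_subset by auto
  define B where "B f = {\<omega>\<in>space M. \<forall>s\<in>L. That s \<omega> = f s}" for f
  have Bm: "B f \<in> events" if f: "f \<in> F" for f
    unfolding B_def
  proof (rule collect_all_fin[OF finL])
    fix s assume s: "s \<in> L"
    have fs: "f s \<in> Pow {1..N}" using f F s by (auto simp: PiE_iff)
    have "That s -` {f s} \<inter> space M \<in> events"
      using That_rv s fs by (intro measurable_sets[where A="count_space (Pow {1..N})"]) auto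
    moreover have "That s -` {f s} \<inter> space M = {x \<in> space M. That s x = f s}" by blast
    ultimately show "{x \<in> space M. That s x = f s} \<in> events" by simp
  qed
  have Im: "{\<omega>\<in>space M. idx \<omega> = j} \<in> events"
  proof -
    have "idx -` {j} \<inter> space M \<in> events"
      using idx_rv j by (intro measurable_sets[where A="count_space {1..N}"]) auto
    moreover have "idx -` {j} \<inter> space M = {x \<in> space M. idx x = j}" by blast
    ultimately show ?thesis by simp
  qed
  have key: "{\<omega>\<in>space M. P \<omega> \<and> restrict (\<lambda>s. That s \<omega>) L \<in> F} = (\<Union>f\<in>F. {\<omega>\<in>space M. P \<omega>} \<inter> B f)" for P
  proof (intro equalityI subsetI)
    fix \<omega> assume "\<omega> \<in> {\<omega>\<in>space M. P \<omega> \<and> restrict (\<lambda>s. That s \<omega>) L \<in> F}"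
    then show "\<omega> \<in> (\<Union>f\<in>F. {\<omega>\<in>space M. P \<omega>} \<inter> B f)"
      unfolding B_def by (intro UN_I[of "restrict (\<lambda>s. That s \<omega>) L"]) auto
  next
    fix \<omega> assume "\<omega> \<in> (\<Union>f\<in>F. {\<omega>\<in>space M. P \<omega>} \<inter> B f)"
    then obtain f where f: "f \<in> F" "\<omega> \<in> space M" "P \<omega>" "\<forall>s\<in>L. That s \<omega> = f s"
      unfolding B_def by blast
    have fP: "f \<in> PiE L (\<lambda>_. Pow {1..N})" using f F by blast
    have "\<forall>i\<in>L. That i \<omega> \<in> Pow {1..N}" using fP f(4) PiE_mem by metis
    then have rP: "restrict (\<lambda>s. That s \<omega>) L \<in> PiE L (\<lambda>_. Pow {1..N})"
      by (simp add: restrict_PiE_iff)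
    have "restrict (\<lambda>s. That s \<omega>) L = f"
      using f(4) by (intro PiE_ext[OF rP fP]) auto
    then show "\<omega> \<in> {\<omega>\<in>space M. P \<omega> \<and> restrict (\<lambda>s. That s \<omega>) L \<in> F}" using f by auto
  qed
  have sp: "{\<omega>\<in>space M. True} = space M" by simp
  have disj: "disjoint_family_on (\<lambda>f. X \<inter> B f) F" for X
    unfolding disjoint_family_on_def
  proof (intro ballI impI)
    fix f g assume fg: "f \<in> F" "g \<in> F" "f \<noteq> g"
    show "(X \<inter> B f) \<inter> (X \<inter> B g) = {}"
    proof (rule ccontr)
      assume "(X \<inter> B f) \<inter> (X \<inter> B g) \<noteq> {}"
      then obtain \<omega> where "\<omega> \<in> B f" "\<omega> \<in> B g" by blast
      then have "\<forall>s\<in>L. f s = g s" unfolding B_def by auto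
      moreover have "f \<in> PiE L (\<lambda>_. Pow {1..N})" "g \<in> PiE L (\<lambda>_. Pow {1..N})" using fg F by blast+
      ultimately have "f = g" using PiE_ext by metis
      then show False using fg by simp
    qed
  qed
  have "prob {\<omega>\<in>space M. idx \<omega> = j \<and> restrict (\<lambda>s. That s \<omega>) L \<in> F}
      = (\<Sum>f\<in>F. prob ({\<omega>\<in>space M. idx \<omega> = j} \<inter> B f))"
    unfolding key using finF Bm Im disj by (intro finite_measure_finite_Union) auto
  also have "\<dots> = (\<Sum>f\<in>F. prob {\<omega>\<in>space M. idx \<omega> = j} * prob (B f))"
  proof (rule sum.cong[OF refl])
    fix f assume f: "f \<in> F"
    have "{\<omega>\<in>space M. idx \<omega> = j} \<inter> B f = {\<omega> \<in> space M. idx \<omega> = j \<and> (\<forall>s\<in>L. That s \<omega> = f s)}"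
      unfolding B_def by blast
    then show "prob ({\<omega>\<in>space M. idx \<omega> = j} \<inter> B f) = prob {\<omega>\<in>space M. idx \<omega> = j} * prob (B f)"
      using idx_indep j f F unfolding B_def by auto
  qed
  also have "\<dots> = prob {\<omega>\<in>space M. idx \<omega> = j} * (\<Sum>f\<in>F. prob (space M \<inter> B f))"
  proof -
    have "space M \<inter> B f = B f" for f unfolding B_def by blast
    then show ?thesis by (simp add: sum_distrib_left)
  qed
  also have "(\<Sum>f\<in>F. prob (space M \<inter> B f)) = prob {\<omega>\<in>space M. True \<and> restrict (\<lambda>s. That s \<omega>) L \<in> F}"
    unfolding key[of "\<lambda>_. True"] sp using finF Bm disj by (intro finite_measure_finite_Union[symmetric]) auto
  finally show ?thesis by (simp only: simp_thms)
qed

lemma sum_cat: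
  fixes g :: "nat \<Rightarrow> real" and Iset :: "'s \<Rightarrow> nat set" and q r :: "nat \<Rightarrow> 's"
  assumes J_sub: "Jset \<subseteq> {1..N}" and J_card: "card Jset = Jnum"
    and I_sub: "\<forall>s\<in>L. Iset s \<subseteq> {1..N}" and I_card: "\<forall>s\<in>L. card (Iset s) = Inum"
    and IJ_disj: "\<forall>s\<in>L. Iset s \<inter> Jset = {}"
    and II_disj: "\<forall>s\<in>L. \<forall>s'\<in>L. s \<noteq> s' \<longrightarrow> Iset s \<inter> Iset s' = {}"
    and sensors: "p \<in> L" "q ` {1..h} \<subseteq> L" "r ` {1..m} \<subseteq> L"
    and distinct: "inj_on q {1..h}" "inj_on r {1..m}"
      "p \<notin> q ` {1..h}" "p \<notin> r ` {1..m}" "q ` {1..h} \<inter> r ` {1..m} = {}"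
    and hJ: "\<forall>j\<in>Jset. g j = cJ" and hP: "\<forall>j\<in>Iset p. g j = cP"
    and hQ: "\<forall>l\<in>{1..h}. \<forall>j\<in>Iset (q l). g j = cQ"
    and hR: "\<forall>l\<in>{1..m}. \<forall>j\<in>Iset (r l). g j = cR"
    and hO: "\<forall>j\<in>{1..N} - (Jset \<union> Iset p \<union> (\<Union>l\<in>{1..h}. Iset (q l)) \<union> (\<Union>l\<in>{1..m}. Iset (r l))). g j = cO"
  shows "(\<Sum>j\<in>{1..N}. g j) = real Jnum * cJ + real Inum * cP + real h * real Inum * cQ
            + real m * real Inum * cR + (real N - real Jnum - real (m + h + 1) * real Inum) * cO"
    and "(\<Sum>j\<in>Iset p \<union> Jset. g j) = real Jnum * cJ + real Inum * cP"
proof -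
  define UQ where "UQ = (\<Union>l\<in>{1..h}. Iset (q l))"
  define UR where "UR = (\<Union>l\<in>{1..m}. Iset (r l))"
  define U where "U = Jset \<union> Iset p \<union> UQ \<union> UR"
  have qL: "\<And>l. l \<in> {1..h} \<Longrightarrow> q l \<in> L" and rL: "\<And>l. l \<in> {1..m} \<Longrightarrow> r l \<in> L"
    using sensors by auto
  have finI: "\<And>s. s \<in> L \<Longrightarrow> finite (Iset s)" using I_sub finite_subset by blast
  have finJ: "finite Jset" using J_sub finite_subset by blast
  have cardUQ: "card UQ = h * Inum"
  proof -
    have "card UQ = (\<Sum>l\<in>{1..h}. card (Iset (q l)))" unfolding UQ_def
    proof (rule card_UN_disjoint)
      show "\<forall>i\<in>{1..h}. \<forall>j\<in>{1..h}. i \<noteq> j \<longrightarrow> Iset (q i) \<inter> Iset (q j) = {}"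
      proof (intro ballI impI)
        fix i j assume ij: "i \<in> {1..h}" "j \<in> {1..h}" "i \<noteq> j"
        then have "q i \<noteq> q j" using distinct(1) inj_onD by metis
        then show "Iset (q i) \<inter> Iset (q j) = {}" using II_disj qL ij by blast
      qed
    qed (use finI qL in auto)
    also have "\<dots> = h * Inum" using I_card qL by simp
    finally show ?thesis .
  qed
  have cardUR: "card UR = m * Inum"
  proof -
    have "card UR = (\<Sum>l\<in>{1..m}. card (Iset (r l)))" unfolding UR_def
    proof (rule card_UN_disjoint)
      show "\<forall>i\<in>{1..m}. \<forall>j\<in>{1..m}. i \<noteq> j \<longrightarrow> Iset (r i) \<inter> Iset (r j) = {}"
      proof (intro ballI impI)
        fix i j assume ij: "i \<in> {1..m}" "j \<in> {1..m}" "i \<noteq> j"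
        then have "r i \<noteq> r j" using distinct(2) inj_onD by metis
        then show "Iset (r i) \<inter> Iset (r j) = {}" using II_disj rL ij by blast
      qed
    qed (use finI rL in auto)
    also have "\<dots> = m * Inum" using I_card rL by simp
    finally show ?thesis .
  qed
  have finUQ: "finite UQ" unfolding UQ_def using finI qL by auto
  have finUR: "finite UR" unfolding UR_def using finI rL by auto
  have d1: "Jset \<inter> Iset p = {}" using IJ_disj sensors by auto
  have d2: "(Jset \<union> Iset p) \<inter> UQ = {}" unfolding UQ_def
  proof -
    have a: "Jset \<inter> Iset (q l) = {}" if "l \<in> {1..h}" for l using IJ_disj qL that by auto
    have b: "Iset p \<inter> Iset (q l) = {}" if "l \<in> {1..h}" for l
    proof -
      have "p \<noteq> q l" using distinct(3) that by blast
      then show ?thesis using II_disj qL that sensors(1) by blast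
    qed
    show "(Jset \<union> Iset p) \<inter> (\<Union>l\<in>{1..h}. Iset (q l)) = {}" using a b by blast
  qed
  have d3: "(Jset \<union> Iset p \<union> UQ) \<inter> UR = {}" unfolding UQ_def UR_def
  proof -
    have a: "Jset \<inter> Iset (r l) = {}" if "l \<in> {1..m}" for l using IJ_disj rL that by auto
    have b: "Iset p \<inter> Iset (r l) = {}" if "l \<in> {1..m}" for l
    proof -
      have "p \<noteq> r l" using distinct(4) that by blast
      then show ?thesis using II_disj rL that sensors(1) by blast
    qed
    have c: "Iset (q l') \<inter> Iset (r l) = {}" if "l \<in> {1..m}" "l' \<in> {1..h}" for l l'
    proof -
      have "q l' \<noteq> r l" using distinct(5) that by blast
      then show ?thesis using II_disj rL qL that by blast
    qed
    show "(Jset \<union> Iset p \<union> (\<Union>l\<in>{1..h}. Iset (q l))) \<inter> (\<Union>l\<in>{1..m}. Iset (r l)) = {}"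
      using a b c by blast
  qed
  have finU: "finite U" unfolding U_def using finJ finI sensors finUQ finUR by auto
  have sJ: "(\<Sum>j\<in>Jset. g j) = real Jnum * cJ" using hJ J_card by simp
  have sP: "(\<Sum>j\<in>Iset p. g j) = real Inum * cP" using hP I_card sensors by simp
  have sQ: "(\<Sum>j\<in>UQ. g j) = real h * real Inum * cQ"
  proof -
    have "(\<Sum>j\<in>UQ. g j) = (\<Sum>j\<in>UQ. cQ)" using hQ unfolding UQ_def by (intro sum.cong) auto
    then show ?thesis using cardUQ by simp
  qed
  have sR: "(\<Sum>j\<in>UR. g j) = real m * real Inum * cR"
  proof -
    have "(\<Sum>j\<in>UR. g j) = (\<Sum>j\<in>UR. cR)" using hR unfolding UR_def by (intro sum.cong) auto
    then show ?thesis using cardUR by simp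
  qed
  have sJP: "(\<Sum>j\<in>Iset p \<union> Jset. g j) = real Jnum * cJ + real Inum * cP"
    using sum.union_disjoint[OF finI[OF sensors(1)] finJ, of g] d1 sJ sP by (simp add: Int_commute)
  then show "(\<Sum>j\<in>Iset p \<union> Jset. g j) = real Jnum * cJ + real Inum * cP" .
  have sU: "(\<Sum>j\<in>U. g j) = real Jnum * cJ + real Inum * cP + real h * real Inum * cQ + real m * real Inum * cR"
  proof -
    have f1: "finite (Jset \<union> Iset p)" using finJ finI sensors by auto
    have f2: "finite (Jset \<union> Iset p \<union> UQ)" using f1 finUQ by auto
    have "(\<Sum>j\<in>U. g j) = (\<Sum>j\<in>Jset \<union> Iset p \<union> UQ. g j) + (\<Sum>j\<in>UR. g j)"
      unfolding U_def by (rule sum.union_disjoint[OF f2 finUR d3])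
    also have "(\<Sum>j\<in>Jset \<union> Iset p \<union> UQ. g j) = (\<Sum>j\<in>Jset \<union> Iset p. g j) + (\<Sum>j\<in>UQ. g j)"
      by (rule sum.union_disjoint[OF f1 finUQ d2])
    also have "(\<Sum>j\<in>Jset \<union> Iset p. g j) = (\<Sum>j\<in>Iset p \<union> Jset. g j)" by (simp add: Un_commute)
    finally show ?thesis using sJP sQ sR by simp
  qed
  have cardU: "card U = Jnum + Inum + h * Inum + m * Inum"
  proof -
    have f1: "finite (Jset \<union> Iset p)" using finJ finI sensors by auto
    have f2: "finite (Jset \<union> Iset p \<union> UQ)" using f1 finUQ by auto
    have "card U = card (Jset \<union> Iset p \<union> UQ) + card UR"
      unfolding U_def by (rule card_Un_disjoint[OF f2 finUR d3])
    also have "card (Jset \<union> Iset p \<union> UQ) = card (Jset \<union> Iset p) + card UQ"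
      by (rule card_Un_disjoint[OF f1 finUQ d2])
    also have "card (Jset \<union> Iset p) = card Jset + card (Iset p)"
      by (rule card_Un_disjoint[OF finJ finI[OF sensors(1)] d1])
    finally show ?thesis using J_card I_card sensors cardUQ cardUR by simp
  qed
  have Usub: "U \<subseteq> {1..N}" unfolding U_def UQ_def UR_def using J_sub I_sub sensors qL rL by blast
  have cardO: "card ({1..N} - U) = N - card U" using Usub finU by (simp add: card_Diff_subset)
  have cardUle: "card U \<le> N" using card_mono[OF _ Usub] by simp
  have sO: "(\<Sum>j\<in>{1..N} - U. g j) = (real N - real Jnum - real (m + h + 1) * real Inum) * cO"
  proof -
    have "(\<Sum>j\<in>{1..N} - U. g j) = (\<Sum>j\<in>{1..N} - U. cO)"
      using hO unfolding U_def UQ_def UR_def by (intro sum.cong) auto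
    also have "\<dots> = real (N - card U) * cO" using cardO by simp
    also have "real (N - card U) = real N - real Jnum - real (m + h + 1) * real Inum"
      using cardUle cardU by (simp add: of_nat_diff algebra_simps)
    finally show ?thesis .
  qed
  have "(\<Sum>j\<in>{1..N}. g j) = (\<Sum>j\<in>U. g j) + (\<Sum>j\<in>{1..N} - U. g j)"
    using sum.subset_diff[OF Usub, of g] by simp
  then show "(\<Sum>j\<in>{1..N}. g j) = real Jnum * cJ + real Inum * cP + real h * real Inum * cQ
            + real m * real Inum * cR + (real N - real Jnum - real (m + h + 1) * real Inum) * cO"
    using sU sO by simp
qed

theorem proposition4:
  fixes M :: "'w measure"
    and N T Inum Jnum h m :: nat
    and L :: "'s set"
    and Jset :: "nat set" and Iset :: "'s \<Rightarrow> nat set"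
    and That :: "'s \<Rightarrow> 'w \<Rightarrow> nat set"
    and idx :: "'w \<Rightarrow> nat"
    and \<epsilon> :: real
    and p :: 's and q r :: "nat \<Rightarrow> 's"
  assumes prob: "prob_space M"
    and NT: "N > T" "T \<ge> 1"
    and fin: "finite L"
    and J_sub: "Jset \<subseteq> {1..N}" and J_card: "card Jset = Jnum"
    and I_sub: "\<forall>s\<in>L. Iset s \<subseteq> {1..N}" and I_card: "\<forall>s\<in>L. card (Iset s) = Inum"
    and IJ_disj: "\<forall>s\<in>L. Iset s \<inter> Jset = {}"
    and II_disj: "\<forall>s\<in>L. \<forall>s'\<in>L. s \<noteq> s' \<longrightarrow> Iset s \<inter> Iset s' = {}"
    and T_eq: "T = Inum + Jnum"
    and eps: "0 \<le> \<epsilon>" "\<epsilon> \<le> (real N - real T) / real N"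
    and That_rv: "\<forall>s\<in>L. That s \<in> measurable M (count_space (Pow {1..N}))"
    and marg: "\<forall>s\<in>L. \<forall>j\<in>{1..N}.
        measure M {\<omega> \<in> space M. j \<in> That s \<omega>} =
          (if j \<in> Iset s \<union> Jset then 1 - \<epsilon> else real T / (real N - real T) * \<epsilon>)"
    and indep_sensors: "\<forall>j\<in>{1..N}.
        prob_space.indep_events M (\<lambda>s. {\<omega> \<in> space M. j \<in> That s \<omega>}) L"
    and idx_rv: "idx \<in> measurable M (count_space {1..N})"
    and idx_unif: "\<forall>j\<in>{1..N}. measure M {\<omega> \<in> space M. idx \<omega> = j} = 1 / real N"
    and idx_indep: "\<forall>j\<in>{1..N}. \<forall>f\<in>PiE L (\<lambda>_. Pow {1..N}).
        measure M {\<omega> \<in> space M. idx \<omega> = j \<and> (\<forall>s\<in>L. That s \<omega> = f s)}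
        = measure M {\<omega> \<in> space M. idx \<omega> = j}
          * measure M {\<omega> \<in> space M. \<forall>s\<in>L. That s \<omega> = f s}"
    and sensors: "p \<in> L" "q ` {1..h} \<subseteq> L" "r ` {1..m} \<subseteq> L"
    and distinct: "inj_on q {1..h}" "inj_on r {1..m}"
      "p \<notin> q ` {1..h}" "p \<notin> r ` {1..m}" "q ` {1..h} \<inter> r ` {1..m} = {}"
    and pos: "measure M {\<omega> \<in> space M. idx \<omega> \<in> That p \<omega>
        \<and> (\<forall>l\<in>{1..h}. idx \<omega> \<in> That (q l) \<omega>)
        \<and> (\<forall>l\<in>{1..m}. idx \<omega> \<notin> That (r l) \<omega>)} > 0"
  shows "cond_prob M (\<lambda>\<omega>. idx \<omega> \<in> Iset p \<union> Jset)
      (\<lambda>\<omega>. idx \<omega> \<in> That p \<omega>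
        \<and> (\<forall>l\<in>{1..h}. idx \<omega> \<in> That (q l) \<omega>)
        \<and> (\<forall>l\<in>{1..m}. idx \<omega> \<notin> That (r l) \<omega>))
    = (let \<phi> = real T / (real N - real T) * \<epsilon> in
        ((1 - \<epsilon>) ^ (h + 1) * \<epsilon> ^ m * (real Jnum / real N)
          + (1 - \<epsilon>) * \<phi> ^ h * (1 - \<phi>) ^ m * (real Inum / real N))
        / ((1 - \<epsilon>) ^ (h + 1) * \<epsilon> ^ m * (real Jnum / real N)
          + real (h + 1) * (1 - \<epsilon>) * \<phi> ^ h * (1 - \<phi>) ^ m * (real Inum / real N)
          + real m * \<epsilon> * \<phi> ^ (h + 1) * (1 - \<phi>) ^ (m - 1) * (real Inum / real N)
          + \<phi> ^ (h + 1) * (1 - \<phi>) ^ m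
              * ((real N - real Jnum - real (m + h + 1) * real Inum) / real N)))"
proof -
  interpret P: prob_space M by (rule prob)
  define \<phi> where "\<phi> = real T / (real N - real T) * \<epsilon>"
  define \<mu> where "\<mu> s j = (if j \<in> Iset s \<union> Jset then 1 - \<epsilon> else \<phi>)" for s j
  define g where "g j = \<mu> p j * (\<Prod>l\<in>{1..h}. \<mu> (q l) j) * (\<Prod>l\<in>{1..m}. 1 - \<mu> (r l) j)" for j
  define C where "C \<omega> = (idx \<omega> \<in> That p \<omega>
        \<and> (\<forall>l\<in>{1..h}. idx \<omega> \<in> That (q l) \<omega>)
        \<and> (\<forall>l\<in>{1..m}. idx \<omega> \<notin> That (r l) \<omega>))" for \<omega>
  define Q where "Q = q ` {1..h}"
  define R where "R = r ` {1..m}"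
  define Aj where "Aj j = {\<omega>\<in>space M. j \<in> That p \<omega> \<and> (\<forall>l\<in>{1..h}. j \<in> That (q l) \<omega>)
        \<and> (\<forall>l\<in>{1..m}. j \<notin> That (r l) \<omega>)}" for j
  define F where "F j = {f \<in> PiE L (\<lambda>_. Pow {1..N}). j \<in> f p \<and> (\<forall>l\<in>{1..h}. j \<in> f (q l))
        \<and> (\<forall>l\<in>{1..m}. j \<notin> f (r l))}" for j
  have qL: "\<And>l. l \<in> {1..h} \<Longrightarrow> q l \<in> L" and rL: "\<And>l. l \<in> {1..m} \<Longrightarrow> r l \<in> L"
    using sensors by auto
  have Npos: "real N > 0" using NT by simp
  have That_space: "That s \<omega> \<in> Pow {1..N}" if "s \<in> L" "\<omega> \<in> space M" for s \<omega>
    using measurable_space[OF That_rv[rule_format, OF that(1)] that(2)] by simp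
  have idx_space: "idx \<omega> \<in> {1..N}" if "\<omega> \<in> space M" for \<omega>
    using measurable_space[OF idx_rv that] by simp

  have probA: "measure M (Aj j) = g j" if j: "j \<in> {1..N}" for j
  proof -
    define E where "E s = {\<omega>\<in>space M. j \<in> That s \<omega>}" for s
    have ind: "P.indep_events E L" using indep_sensors j unfolding E_def by blast
    have QL: "insert p Q \<subseteq> L" and RL: "R \<subseteq> L" using sensors unfolding Q_def R_def by auto
    have disj: "insert p Q \<inter> R = {}" using distinct unfolding Q_def R_def by auto
    have finR: "finite R" and finQ: "finite Q" unfolding Q_def R_def by auto
    have eq: "Aj j = {\<omega>\<in>space M. (\<forall>s\<in>insert p Q. \<omega>\<in>E s) \<and> (\<forall>s\<in>R. \<omega>\<notin>E s)}"
      unfolding Aj_def E_def Q_def R_def by auto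
    have pE: "measure M (E s) = \<mu> s j" if "s \<in> L" for s
      using marg that j unfolding E_def \<mu>_def \<phi>_def by auto
    have "measure M (Aj j) = (\<Prod>s\<in>insert p Q. measure M (E s)) * (\<Prod>s\<in>R. 1 - measure M (E s))"
      unfolding eq by (rule P.indep_mixed[OF ind fin finR RL QL disj])
    also have "(\<Prod>s\<in>insert p Q. measure M (E s)) = \<mu> p j * (\<Prod>s\<in>Q. \<mu> s j)"
    proof -
      have "p \<notin> Q" using distinct unfolding Q_def by auto
      then have "(\<Prod>s\<in>insert p Q. measure M (E s)) = measure M (E p) * (\<Prod>s\<in>Q. measure M (E s))"
        using finQ by simp
      also have "\<dots> = \<mu> p j * (\<Prod>s\<in>Q. \<mu> s j)"
        using pE QL by (intro arg_cong2[where f="(*)"] prod.cong) auto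
      finally show ?thesis .
    qed
    also have "(\<Prod>s\<in>Q. \<mu> s j) = (\<Prod>l\<in>{1..h}. \<mu> (q l) j)"
      unfolding Q_def using prod.reindex[OF distinct(1), of "\<lambda>s. \<mu> s j"] by simp
    also have "(\<Prod>s\<in>R. 1 - measure M (E s)) = (\<Prod>s\<in>R. 1 - \<mu> s j)"
      using pE RL by (intro prod.cong) auto
    also have "\<dots> = (\<Prod>l\<in>{1..m}. 1 - \<mu> (r l) j)"
      unfolding R_def using prod.reindex[OF distinct(2), of "\<lambda>s. 1 - \<mu> s j"] by simp
    finally show ?thesis unfolding g_def by simp
  qed

  have Ajm: "Aj j \<in> P.events" for j
  proof -
    have "Aj j = {\<omega>\<in>space M. (\<forall>s\<in>insert p Q. \<omega>\<in>{\<omega>\<in>space M. j \<in> That s \<omega>}) \<and> (\<forall>s\<in>R. \<omega>\<notin>{\<omega>\<in>space M. j \<in> That s \<omega>})}"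
      unfolding Aj_def Q_def R_def by auto
    also have "\<dots> \<in> P.events"
    proof (rule P.evset_meas[where L=L])
      show "(\<lambda>s. {\<omega>\<in>space M. j \<in> That s \<omega>}) ` L \<subseteq> P.events"
      proof
        fix X assume "X \<in> (\<lambda>s. {\<omega>\<in>space M. j \<in> That s \<omega>}) ` L"
        then obtain s where s: "s \<in> L" "X = {\<omega>\<in>space M. j \<in> That s \<omega>}" by blast
        have "That s -` {A \<in> Pow {1..N}. j \<in> A} \<inter> space M \<in> P.events"
          using That_rv s by (intro measurable_sets[where A="count_space (Pow {1..N})"]) auto
        moreover have "That s -` {A \<in> Pow {1..N}. j \<in> A} \<inter> space M = X"
          using s That_space by blast
        ultimately show "X \<in> P.events" by simp
      qed
    qed (use sensors in \<open>auto simp: Q_def R_def\<close>)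
    finally show ?thesis .
  qed
  have Im: "{\<omega>\<in>space M. idx \<omega> = j} \<in> P.events" for j
  proof -
    have "idx -` ({j} \<inter> {1..N}) \<inter> space M \<in> P.events"
      using idx_rv by (intro measurable_sets[where A="count_space {1..N}"]) auto
    moreover have "idx -` ({j} \<inter> {1..N}) \<inter> space M = {x \<in> space M. idx x = j}" using idx_space by blast
    ultimately show ?thesis by simp
  qed
  have piece: "measure M ({\<omega>\<in>space M. idx \<omega> = j} \<inter> Aj j) = g j / real N" if j: "j \<in> {1..N}" for j
  proof -
    have FL: "F j \<subseteq> PiE L (\<lambda>_. Pow {1..N})" unfolding F_def by auto
    have rs: "restrict (\<lambda>s. That s \<omega>) L \<in> PiE L (\<lambda>_. Pow {1..N})" if "\<omega> \<in> space M" for \<omega>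
      using That_space that by (simp add: restrict_PiE_iff)
    have e1: "{\<omega>\<in>space M. idx \<omega> = j} \<inter> Aj j = {\<omega>\<in>space M. idx \<omega> = j \<and> restrict (\<lambda>s. That s \<omega>) L \<in> F j}"
      unfolding Aj_def F_def using rs sensors qL rL by auto
    have e2: "Aj j = {\<omega>\<in>space M. restrict (\<lambda>s. That s \<omega>) L \<in> F j}"
      unfolding Aj_def F_def using rs sensors qL rL by auto
    have "measure M ({\<omega>\<in>space M. idx \<omega> = j} \<inter> Aj j)
        = measure M {\<omega>\<in>space M. idx \<omega> = j} * measure M (Aj j)"
      unfolding e1 unfolding e2 by (rule P.idx_indep_set[OF That_rv idx_rv idx_indep fin j FL])
    then show ?thesis using idx_unif j probA[OF j] by simp
  qed
  have sumK: "measure M {\<omega>\<in>space M. idx \<omega> \<in> K \<and> C \<omega>} = (\<Sum>j\<in>K. g j) / real N"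
    if K: "K \<subseteq> {1..N}" for K
  proof -
    have finK: "finite K" using K finite_subset by blast
    have "{\<omega>\<in>space M. idx \<omega> \<in> K \<and> C \<omega>} = (\<Union>j\<in>K. {\<omega>\<in>space M. idx \<omega> = j} \<inter> Aj j)"
      unfolding C_def Aj_def by auto
    moreover have "measure M (\<Union>j\<in>K. {\<omega>\<in>space M. idx \<omega> = j} \<inter> Aj j)
        = (\<Sum>j\<in>K. measure M ({\<omega>\<in>space M. idx \<omega> = j} \<inter> Aj j))"
    proof (rule P.finite_measure_finite_Union[OF finK])
      show "(\<lambda>j. {\<omega>\<in>space M. idx \<omega> = j} \<inter> Aj j) ` K \<subseteq> P.events" using Im Ajm by auto
      show "disjoint_family_on (\<lambda>j. {\<omega>\<in>space M. idx \<omega> = j} \<inter> Aj j) K"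
        unfolding disjoint_family_on_def by auto
    qed
    moreover have "(\<Sum>j\<in>K. measure M ({\<omega>\<in>space M. idx \<omega> = j} \<inter> Aj j)) = (\<Sum>j\<in>K. g j / real N)"
      using piece K by (intro sum.cong) auto
    ultimately show ?thesis by (simp add: sum_divide_distrib)
  qed

  define cJ where "cJ = (1 - \<epsilon>) * (1 - \<epsilon>) ^ h * \<epsilon> ^ m"
  define cP where "cP = (1 - \<epsilon>) * \<phi> ^ h * (1 - \<phi>) ^ m"
  define cQ where "cQ = \<phi> * ((1 - \<epsilon>) * \<phi> ^ (h - 1)) * (1 - \<phi>) ^ m"
  define cR where "cR = \<phi> * \<phi> ^ h * (\<epsilon> * (1 - \<phi>) ^ (m - 1))"
  define cO where "cO = \<phi> * \<phi> ^ h * (1 - \<phi>) ^ m"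
  have hJ: "\<forall>j\<in>Jset. g j = cJ"
    unfolding g_def cJ_def \<mu>_def by simp
  have hP: "\<forall>j\<in>Iset p. g j = cP"
  proof
    fix j assume j: "j \<in> Iset p"
    have nJ: "j \<notin> Jset" using IJ_disj sensors j by auto
    have nQ: "j \<notin> Iset (q l)" if "l \<in> {1..h}" for l
    proof -
      have "p \<noteq> q l" using distinct(3) that by blast
      then show ?thesis using II_disj qL that sensors(1) j by blast
    qed
    have nR: "j \<notin> Iset (r l)" if "l \<in> {1..m}" for l
    proof -
      have "p \<noteq> r l" using distinct(4) that by blast
      then show ?thesis using II_disj rL that sensors(1) j by blast
    qed
    have "(\<Prod>l\<in>{1..h}. \<mu> (q l) j) = (\<Prod>l\<in>{1..h}. \<phi>)" using nQ nJ unfolding \<mu>_def by (intro prod.cong) auto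
    moreover have "(\<Prod>l\<in>{1..m}. 1 - \<mu> (r l) j) = (\<Prod>l\<in>{1..m}. 1 - \<phi>)" using nR nJ unfolding \<mu>_def by (intro prod.cong) auto
    ultimately show "g j = cP" unfolding g_def cP_def using j by (simp add: \<mu>_def)
  qed
  have hQ: "\<forall>l0\<in>{1..h}. \<forall>j\<in>Iset (q l0). g j = cQ"
  proof (intro ballI)
    fix l0 j assume l0: "l0 \<in> {1..h}" and j: "j \<in> Iset (q l0)"
    have nJ: "j \<notin> Jset" using IJ_disj qL[OF l0] j by auto
    have nP: "j \<notin> Iset p"
    proof -
      have "p \<noteq> q l0" using distinct(3) l0 by blast
      then show ?thesis using II_disj qL[OF l0] sensors(1) j by blast
    qed
    have nR: "j \<notin> Iset (r l)" if "l \<in> {1..m}" for l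
    proof -
      have "q l0 \<noteq> r l" using distinct(5) that l0 by blast
      then show ?thesis using II_disj rL qL l0 that j by blast
    qed
    have mq: "\<mu> (q l) j = (if l = l0 then 1 - \<epsilon> else \<phi>)" if "l \<in> {1..h}" for l
    proof (cases "l = l0")
      case True then show ?thesis using j unfolding \<mu>_def by simp
    next
      case False
      then have "q l \<noteq> q l0" using distinct(1) that l0 inj_onD by metis
      then have "j \<notin> Iset (q l)" using II_disj qL that l0 j by blast
      then show ?thesis using False nJ unfolding \<mu>_def by simp
    qed
    have "(\<Prod>l\<in>{1..h}. \<mu> (q l) j) = (\<Prod>l\<in>{1..h}. (if l = l0 then 1 - \<epsilon> else \<phi>))"
      using mq by (intro prod.cong) auto
    also have "\<dots> = (1 - \<epsilon>) * (\<Prod>l\<in>{1..h} - {l0}. (if l = l0 then 1 - \<epsilon> else \<phi>))"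
      by (subst prod.remove[of "{1..h}" l0]) (use l0 in auto)
    also have "(\<Prod>l\<in>{1..h} - {l0}. (if l = l0 then 1 - \<epsilon> else \<phi>)) = (\<Prod>l\<in>{1..h} - {l0}. \<phi>)"
      by (intro prod.cong) auto
    also have "\<dots> = \<phi> ^ (h - 1)" using l0 by simp
    finally have pq: "(\<Prod>l\<in>{1..h}. \<mu> (q l) j) = (1 - \<epsilon>) * \<phi> ^ (h - 1)" .
    have "(\<Prod>l\<in>{1..m}. 1 - \<mu> (r l) j) = (\<Prod>l\<in>{1..m}. 1 - \<phi>)" using nR nJ unfolding \<mu>_def by (intro prod.cong) auto
    then show "g j = cQ" unfolding g_def cQ_def using pq nP nJ by (simp add: \<mu>_def)
  qed
  have hR: "\<forall>l0\<in>{1..m}. \<forall>j\<in>Iset (r l0). g j = cR"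
  proof (intro ballI)
    fix l0 j assume l0: "l0 \<in> {1..m}" and j: "j \<in> Iset (r l0)"
    have nJ: "j \<notin> Jset" using IJ_disj rL[OF l0] j by auto
    have nP: "j \<notin> Iset p"
    proof -
      have "p \<noteq> r l0" using distinct(4) l0 by blast
      then show ?thesis using II_disj rL[OF l0] sensors(1) j by blast
    qed
    have nQ: "j \<notin> Iset (q l)" if "l \<in> {1..h}" for l
    proof -
      have "q l \<noteq> r l0" using distinct(5) that l0 by blast
      then show ?thesis using II_disj rL qL l0 that j by blast
    qed
    have mr: "1 - \<mu> (r l) j = (if l = l0 then \<epsilon> else 1 - \<phi>)" if "l \<in> {1..m}" for l
    proof (cases "l = l0")
      case True then show ?thesis using j unfolding \<mu>_def by simp
    next
      case False
      then have "r l \<noteq> r l0" using distinct(2) that l0 inj_onD by metis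
      then have "j \<notin> Iset (r l)" using II_disj rL that l0 j by blast
      then show ?thesis using False nJ unfolding \<mu>_def by simp
    qed
    have "(\<Prod>l\<in>{1..m}. 1 - \<mu> (r l) j) = (\<Prod>l\<in>{1..m}. (if l = l0 then \<epsilon> else 1 - \<phi>))"
      using mr by (intro prod.cong) auto
    also have "\<dots> = \<epsilon> * (\<Prod>l\<in>{1..m} - {l0}. (if l = l0 then \<epsilon> else 1 - \<phi>))"
      by (subst prod.remove[of "{1..m}" l0]) (use l0 in auto)
    also have "(\<Prod>l\<in>{1..m} - {l0}. (if l = l0 then \<epsilon> else 1 - \<phi>)) = (\<Prod>l\<in>{1..m} - {l0}. 1 - \<phi>)"
      by (intro prod.cong) auto
    also have "\<dots> = (1 - \<phi>) ^ (m - 1)" using l0 by simp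
    finally have pr: "(\<Prod>l\<in>{1..m}. 1 - \<mu> (r l) j) = \<epsilon> * (1 - \<phi>) ^ (m - 1)" .
    have "(\<Prod>l\<in>{1..h}. \<mu> (q l) j) = (\<Prod>l\<in>{1..h}. \<phi>)" using nQ nJ unfolding \<mu>_def by (intro prod.cong) auto
    then show "g j = cR" unfolding g_def cR_def using pr nP nJ by (simp add: \<mu>_def)
  qed
  have hO: "\<forall>j\<in>{1..N} - (Jset \<union> Iset p \<union> (\<Union>l\<in>{1..h}. Iset (q l)) \<union> (\<Union>l\<in>{1..m}. Iset (r l))). g j = cO"
  proof
    fix j assume j: "j \<in> {1..N} - (Jset \<union> Iset p \<union> (\<Union>l\<in>{1..h}. Iset (q l)) \<union> (\<Union>l\<in>{1..m}. Iset (r l)))"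
    have "(\<Prod>l\<in>{1..h}. \<mu> (q l) j) = (\<Prod>l\<in>{1..h}. \<phi>)" using j unfolding \<mu>_def by (intro prod.cong) auto
    moreover have "(\<Prod>l\<in>{1..m}. 1 - \<mu> (r l) j) = (\<Prod>l\<in>{1..m}. 1 - \<phi>)" using j unfolding \<mu>_def by (intro prod.cong) auto
    ultimately show "g j = cO" unfolding g_def cO_def using j by (simp add: \<mu>_def)
  qed
  note sc = sum_cat[OF J_sub J_card I_sub I_card IJ_disj II_disj sensors distinct hJ hP hQ hR hO]

  have num: "measure M {\<omega>\<in>space M. idx \<omega> \<in> Iset p \<union> Jset \<and> C \<omega>}
      = (real Jnum * cJ + real Inum * cP) / real N"
    using sumK[of "Iset p \<union> Jset"] sc(2) J_sub I_sub sensors by auto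
  have den: "measure M {\<omega>\<in>space M. C \<omega>}
      = (real Jnum * cJ + real Inum * cP + real h * real Inum * cQ
            + real m * real Inum * cR + (real N - real Jnum - real (m + h + 1) * real Inum) * cO) / real N"
  proof -
    have "{\<omega>\<in>space M. C \<omega>} = {\<omega>\<in>space M. idx \<omega> \<in> {1..N} \<and> C \<omega>}" using idx_space by auto
    then show ?thesis using sumK[of "{1..N}"] sc(1) by simp
  qed
  have cq: "real h * cQ = real h * ((1 - \<epsilon>) * \<phi> ^ h * (1 - \<phi>) ^ m)"
  proof (cases h)
    case 0 then show ?thesis by simp
  next
    case (Suc k) then show ?thesis unfolding cQ_def by (simp add: algebra_simps)
  qed
  have lhs: "cond_prob M (\<lambda>\<omega>. idx \<omega> \<in> Iset p \<union> Jset) C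
      = measure M {\<omega>\<in>space M. idx \<omega> \<in> Iset p \<union> Jset \<and> C \<omega>} / measure M {\<omega>\<in>space M. C \<omega>}"
    by (simp add: cond_prob_def)
  have C_eq: "(\<lambda>\<omega>. idx \<omega> \<in> That p \<omega>
        \<and> (\<forall>l\<in>{1..h}. idx \<omega> \<in> That (q l) \<omega>)
        \<and> (\<forall>l\<in>{1..m}. idx \<omega> \<notin> That (r l) \<omega>)) = C"
    unfolding C_def by simp
  have hq: "real h * real Inum * cQ = real h * real Inum * ((1 - \<epsilon>) * \<phi> ^ h * (1 - \<phi>) ^ m)"
    using cq by (metis mult.commute mult.left_commute)
  have n1: "(1 - \<epsilon>) ^ (h + 1) * \<epsilon> ^ m * (real Jnum / real N)
          + (1 - \<epsilon>) * \<phi> ^ h * (1 - \<phi>) ^ m * (real Inum / real N)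
       = (real Jnum * cJ + real Inum * cP) / real N"
    unfolding cJ_def cP_def using Npos by (simp add: field_simps)
  have d1: "(1 - \<epsilon>) ^ (h + 1) * \<epsilon> ^ m * (real Jnum / real N)
          + real (h + 1) * (1 - \<epsilon>) * \<phi> ^ h * (1 - \<phi>) ^ m * (real Inum / real N)
          + real m * \<epsilon> * \<phi> ^ (h + 1) * (1 - \<phi>) ^ (m - 1) * (real Inum / real N)
          + \<phi> ^ (h + 1) * (1 - \<phi>) ^ m
              * ((real N - real Jnum - real (m + h + 1) * real Inum) / real N)
       = (real Jnum * cJ + real Inum * cP + real h * real Inum * ((1 - \<epsilon>) * \<phi> ^ h * (1 - \<phi>) ^ m)
            + real m * real Inum * cR + (real N - real Jnum - real (m + h + 1) * real Inum) * cO) / real N"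
    unfolding cJ_def cP_def cR_def cO_def using Npos by (simp add: field_simps)
  have fin: "(real Jnum * cJ + real Inum * cP) / real N /
      ((real Jnum * cJ + real Inum * cP + real h * real Inum * ((1 - \<epsilon>) * \<phi> ^ h * (1 - \<phi>) ^ m)
            + real m * real Inum * cR + (real N - real Jnum - real (m + h + 1) * real Inum) * cO) / real N)
    = (let \<phi> = real T / (real N - real T) * \<epsilon> in
        ((1 - \<epsilon>) ^ (h + 1) * \<epsilon> ^ m * (real Jnum / real N)
          + (1 - \<epsilon>) * \<phi> ^ h * (1 - \<phi>) ^ m * (real Inum / real N))
        / ((1 - \<epsilon>) ^ (h + 1) * \<epsilon> ^ m * (real Jnum / real N)
          + real (h + 1) * (1 - \<epsilon>) * \<phi> ^ h * (1 - \<phi>) ^ m * (real Inum / real N)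
          + real m * \<epsilon> * \<phi> ^ (h + 1) * (1 - \<phi>) ^ (m - 1) * (real Inum / real N)
          + \<phi> ^ (h + 1) * (1 - \<phi>) ^ m
              * ((real N - real Jnum - real (m + h + 1) * real Inum) / real N)))"
    unfolding Let_def \<phi>_def[symmetric] n1 d1 ..
  show ?thesis
    unfolding C_eq lhs num den hq by (rule fin)
qed

end
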